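(* Let $\phi:\mathbb{R}\to\mathbb{R}_+$ be a non-constant, monotonically increasing function with at most polynomial growth (there exists $\alpha\geq 0$ with $\limsup_{v\to+\infty}\phi(v)/|v|^\alpha<+\infty$), and let $m^\phi:=\left(\int z\phi(z)\mathcal{D}z\right)^{-1}$. Let $X_1,X_2,\dots$ be i.i.d. standard normal random variables and $\mathbf{X}_{1:P}:=(X_1,\dots,X_P)$. Then $$\mathbb{E}\left(m^\phi\int z\,\phi\left(\frac{\|\mathbf{X}_{1:P}\|}{\sqrt{P}}z\right)\mathcal{D}z-\frac{\|\mathbf{X}_{1:P}\|}{\sqrt{P}}\right)^2\xrightarrow[P\to\infty]{}0.$$
   Context: $\mathcal{D}z:=\frac{1}{\sqrt{2\pi}}e^{-z^2/2}\,\mathrm{d}z$ denotes the standard Gaussian measure on $\mathbb{R}$, and $\|\cdot\|$ is the Euclidean norm. *)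

theory Defs
  imports "HOL-Probability.Probability"
begin

definition gauss_int :: "(real \<Rightarrow> real) \<Rightarrow> real" where
  "gauss_int f = (LINT z|lborel. std_normal_density z * f z)"

definition m_phi :: "(real \<Rightarrow> real) \<Rightarrow> real" where
  "m_phi \<phi> = inverse (gauss_int (\<lambda>z. z * \<phi> z))"

end

theory Submission
  imports Defs
begin
lemma poly_bound:
  fixes \<phi> :: "real \<Rightarrow> real"
  assumes mono: "mono \<phi>"
    and growth: "\<exists>\<alpha>\<ge>0. \<exists>C. eventually (\<lambda>v. \<phi> v / \<bar>v\<bar> powr \<alpha> \<le> C) at_top"
  shows "\<exists>A C n. A \<ge> 0 \<and> C \<ge> 0 \<and> (\<forall>v. \<phi> v \<le> A + C * v^(2*n))"
proof -
  obtain \<alpha> C where a: "\<alpha> \<ge> 0" and ev: "eventually (\<lambda>v. \<phi> v / \<bar>v\<bar> powr \<alpha> \<le> C) at_top"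
    using growth by blast
  then obtain N where N: "\<And>v. v \<ge> N \<Longrightarrow> \<phi> v / \<bar>v\<bar> powr \<alpha> \<le> C"
    by (auto simp: eventually_at_top_linorder)
  define v0 where "v0 = max N 1"
  define n where "n = nat \<lceil>\<alpha>\<rceil>"
  have big: "\<phi> v \<le> \<bar>C\<bar> * v^(2*n)" if "v \<ge> v0" for v
  proof -
    have v1: "v \<ge> 1" "v \<ge> N" using that by (auto simp: v0_def)
    have pos: "\<bar>v\<bar> powr \<alpha> > 0" using v1 by simp
    have "\<phi> v \<le> C * \<bar>v\<bar> powr \<alpha>" using N[OF v1(2)] pos by (simp add: divide_le_eq)
    also have "\<dots> \<le> \<bar>C\<bar> * \<bar>v\<bar> powr \<alpha>" using pos by (intro mult_right_mono) auto
    also have "\<bar>v\<bar> powr \<alpha> \<le> \<bar>v\<bar> powr (real (2*n))"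
      using v1 a by (intro powr_mono) (auto simp: n_def, linarith)
    also have "\<bar>v\<bar> powr (real (2*n)) = v^(2*n)" using v1 by (subst powr_realpow) auto
    finally show ?thesis by (simp add: mult_left_mono)
  qed
  have "\<phi> v \<le> \<bar>\<phi> v0\<bar> + \<bar>C\<bar> * v^(2*n)" for v
  proof (cases "v \<ge> v0")
    case True then show ?thesis using big[OF True] by simp
  next
    case False
    then have "\<phi> v \<le> \<phi> v0" using mono by (simp add: mono_def)
    moreover have "0 \<le> \<bar>C\<bar> * v^(2*n)" by (simp add: zero_le_even_power)
    ultimately show ?thesis by linarith
  qed
  then show ?thesis by (intro exI[of _ "\<bar>\<phi> v0\<bar>"] exI[of _ "\<bar>C\<bar>"] exI[of _ n]) auto
qed

abbreviation "\<rho> \<equiv> std_normal_density"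

lemma rho_nonneg: "0 \<le> \<rho> x" by (simp add: normal_density_nonneg)

lemma integrable_f1: "integrable lborel (\<lambda>z. \<rho> z * (1 + z^2))"
proof -
  have "integrable lborel (\<lambda>z. \<rho> z * z^0 + \<rho> z * z^2)"
    by (intro Bochner_Integration.integrable_add integrable_std_normal_moment)
  moreover have "(\<lambda>z. \<rho> z * z^0 + \<rho> z * z^2) = (\<lambda>z. \<rho> z * (1 + z^2))"
    by (rule ext) (simp only: power_0 mult_1_right distrib_left)
  ultimately show ?thesis by simp
qed

lemma integrable_f2: "integrable lborel (\<lambda>z. \<rho> z * (z^k * (1 + z^2)))"
proof -
  have "integrable lborel (\<lambda>z. \<rho> z * z^k + \<rho> z * z^(k+2))"
    by (intro Bochner_Integration.integrable_add integrable_std_normal_moment)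
  moreover have "(\<lambda>z. \<rho> z * z^k + \<rho> z * z^(k+2)) = (\<lambda>z. \<rho> z * (z^k * (1 + z^2)))"
    by (rule ext) (simp only: power_add distrib_left distrib_right mult_1_right mult.assoc)
  ultimately show ?thesis by simp
qed

definition hh :: "(real \<Rightarrow> real) \<Rightarrow> real \<Rightarrow> real" where
  "hh \<phi> r = gauss_int (\<lambda>z. z * \<phi> (r * z))"

definition "J1 = integral\<^sup>L lborel (\<lambda>z. \<rho> z * (1 + z^2))"
definition J2 :: "nat \<Rightarrow> real" where "J2 n = integral\<^sup>L lborel (\<lambda>z. \<rho> z * (z^(2*n) * (1 + z^2)))"

context
  fixes \<phi> :: "real \<Rightarrow> real" and A C :: real and n :: nat
  assumes nonneg: "\<And>x. \<phi> x \<ge> 0" and mono: "mono \<phi>"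
    and bnd: "\<And>v. \<phi> v \<le> A + C * v^(2*n)" and A0: "A \<ge> 0" and C0: "C \<ge> 0"
begin

lemma phi_meas: "\<phi> \<in> borel_measurable borel"
  using mono by (rule borel_measurable_mono)


lemma wb_eq: "\<rho> z * (1 + z^2) * (A + C * r^(2*n) * z^(2*n))
   = A * (\<rho> z * (1 + z^2)) + (C * r^(2*n)) * (\<rho> z * (z^(2*n) * (1 + z^2)))"
  by (simp add: algebra_simps)

lemma integrable_wb: "integrable lborel (\<lambda>z. \<rho> z * (1 + z^2) * (A + C * r^(2*n) * z^(2*n)))"
  unfolding wb_eq
  by (intro Bochner_Integration.integrable_add integrable_mult_right integrable_f1 integrable_f2)

lemma integral_wb: "integral\<^sup>L lborel (\<lambda>z. \<rho> z * (1 + z^2) * (A + C * r^(2*n) * z^(2*n)))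
   = A * J1 + C * r^(2*n) * J2 n"
  unfolding wb_eq J1_def J2_def
  apply (subst Bochner_Integration.integral_add)
    apply (rule integrable_mult_right, rule integrable_f1)
   apply (rule integrable_mult_right, rule integrable_f2)
  apply (simp only: integral_mult_right_zero)
  done

lemma norm_le_wb:
  assumes "\<bar>r\<bar> \<le> R"
  shows "norm (\<rho> z * (z * \<phi> (r * z))) \<le> \<rho> z * (1 + z^2) * (A + C * R^(2*n) * z^(2*n))"
proof -
  have az: "\<bar>z\<bar> \<le> 1 + z^2"
  proof (cases "\<bar>z\<bar> \<le> 1")
    case False
    then have "\<bar>z\<bar> * 1 \<le> \<bar>z\<bar> * \<bar>z\<bar>" by (intro mult_left_mono) auto
    then show ?thesis by (simp add: power2_eq_square)
  qed (simp add: add_increasing2)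
  have "r^(2*n) \<le> R^(2*n)"
  proof -
    have "\<bar>r\<bar>^(2*n) \<le> R^(2*n)" by (rule power_mono) (use assms in auto)
    then show ?thesis by (simp add: power_even_abs)
  qed
  then have "r^(2*n) * z^(2*n) \<le> R^(2*n) * z^(2*n)"
    by (intro mult_right_mono) (auto simp: zero_le_even_power)
  then have "C * (r^(2*n) * z^(2*n)) \<le> C * (R^(2*n) * z^(2*n))"
    using C0 by (intro mult_left_mono)
  then have "\<phi> (r * z) \<le> A + C * R^(2*n) * z^(2*n)"
    using bnd[of "r*z"] by (simp add: power_mult_distrib mult.assoc)
  then have "\<bar>z\<bar> * \<phi> (r * z) \<le> (1 + z^2) * (A + C * R^(2*n) * z^(2*n))"
    using az nonneg[of "r*z"] by (intro mult_mono) auto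
  then show ?thesis
    using rho_nonneg[of z] nonneg[of "r*z"]
    by (simp add: abs_mult mult.assoc mult_left_mono)
qed

lemma wb_nonneg: "0 \<le> \<rho> z * (1 + z^2) * (A + C * R^(2*n) * z^(2*n))"
  using A0 C0 rho_nonneg[of z] by (intro mult_nonneg_nonneg add_nonneg_nonneg) (auto simp: zero_le_even_power)

lemma integrable_h: "integrable lborel (\<lambda>z. \<rho> z * (z * \<phi> (r * z)))"
proof (rule Bochner_Integration.integrable_bound[OF integrable_wb[of "\<bar>r\<bar>"]])
  note phi_meas[measurable]
  show "AE x in lborel. norm (\<rho> x * (x * \<phi> (r * x))) \<le> norm (\<rho> x * (1 + x^2) * (A + C * \<bar>r\<bar>^(2*n) * x^(2*n)))"
    using norm_le_wb[of r "\<bar>r\<bar>"] wb_nonneg[of _ "\<bar>r\<bar>"]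
    by (intro AE_I2) (simp only: real_norm_def abs_of_nonneg)
next
  have "(\<lambda>z. \<phi> (r * z)) \<in> borel_measurable lborel"
    by (rule measurable_compose[OF _ phi_meas]) simp
  then show "(\<lambda>z. \<rho> z * (z * \<phi> (r * z))) \<in> borel_measurable lborel"
    by measurable
qed

lemma hh_bound: "\<bar>hh \<phi> r\<bar> \<le> A * J1 + C * \<bar>r\<bar>^(2*n) * J2 n"
proof -
  have "\<bar>hh \<phi> r\<bar> = norm (integral\<^sup>L lborel (\<lambda>z. \<rho> z * (z * \<phi> (r * z))))"
    by (simp add: hh_def gauss_int_def)
  also have "\<dots> \<le> integral\<^sup>L lborel (\<lambda>z. \<rho> z * (1 + z^2) * (A + C * \<bar>r\<bar>^(2*n) * z^(2*n)))"
    by (rule Bochner_Integration.integral_norm_bound_integral[OF integrable_h integrable_wb]) (rule norm_le_wb, simp)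
  finally show ?thesis by (simp add: integral_wb)
qed

end

lemma rho_pos: "0 < \<rho> x" by (simp add: normal_density_pos)

lemma rho_anti: assumes "\<bar>x\<bar> \<le> \<bar>y\<bar>" shows "\<rho> y \<le> \<rho> x"
proof -
  have "y^2 \<ge> x^2" using assms by (simp add: abs_le_square_iff)
  then show ?thesis unfolding normal_density_def by (simp add: divide_right_mono)
qed

lemma pos_integral:
  fixes g :: "real \<Rightarrow> real"
  assumes int: "integrable lborel (\<lambda>z. \<rho> z * g z)" and g0: "\<And>z. g z \<ge> 0"
    and c: "c > 0" and gc: "\<And>z. z \<in> {a..a+1} \<Longrightarrow> g z \<ge> c"
  shows "integral\<^sup>L lborel (\<lambda>z. \<rho> z * g z) > 0"
proof -
  define d where "d = c * \<rho> (\<bar>a\<bar> + 1)"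
  have d0: "d > 0" using c rho_pos by (simp add: d_def)
  have "integral\<^sup>L lborel (\<lambda>z. d * indicator {a..a+1} z) = d"
    by (simp add: measure_lborel_Icc)
  also have "integral\<^sup>L lborel (\<lambda>z. d * indicator {a..a+1} z) \<le> integral\<^sup>L lborel (\<lambda>z. \<rho> z * g z)"
  proof (rule integral_mono[OF _ int])
    show "integrable lborel (\<lambda>z. d * indicator {a..a+1} z)"
      by (intro integrable_mult_right integrable_real_indicator) auto
    fix z :: real
    show "d * indicator {a..a+1} z \<le> \<rho> z * g z"
    proof (cases "z \<in> {a..a+1}")
      case True
      then have "\<bar>z\<bar> \<le> \<bar>\<bar>a\<bar> + 1\<bar>" by auto
      then have "\<rho> (\<bar>a\<bar> + 1) \<le> \<rho> z" by (rule rho_anti)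
      then have "c * \<rho> (\<bar>a\<bar> + 1) \<le> g z * \<rho> z"
        using gc[OF True] c rho_pos[of "\<bar>a\<bar>+1"] by (intro mult_mono) auto
      then show ?thesis using True by (simp add: d_def mult.commute)
    next
      case False
      then show ?thesis using g0[of z] rho_nonneg[of z] by simp
    qed
  qed
  finally show ?thesis using d0 by simp
qed

context
  fixes \<phi> :: "real \<Rightarrow> real" and A C :: real and n :: nat
  assumes nonneg: "\<And>x. \<phi> x \<ge> 0" and mono: "mono \<phi>"
    and bnd: "\<And>v. \<phi> v \<le> A + C * v^(2*n)" and A0: "A \<ge> 0" and C0: "C \<ge> 0"
begin


lemma hh_cont: "isCont (hh \<phi>) 1"
proof (rule continuous_at_sequentiallyI)
  fix u :: "nat \<Rightarrow> real" assume u: "u \<longlonglongrightarrow> 1"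
  note phi_meas[OF nonneg mono bnd A0 C0, measurable]
  define v where "v k = max (1/2) (min 2 (u k))" for k
  have v: "v \<longlonglongrightarrow> 1"
    using tendsto_max[OF tendsto_const tendsto_min[OF tendsto_const u], of "1/2" 2]
    by (simp add: v_def[abs_def])
  have ev: "eventually (\<lambda>k. u k = v k) sequentially"
  proof -
    have "eventually (\<lambda>k. u k \<in> {1/2<..<2}) sequentially"
      using u by (rule topological_tendstoD) auto
    then show ?thesis by eventually_elim (auto simp: v_def)
  qed
  have null: "{a. \<not> isCont \<phi> a} \<in> null_sets lborel"
    by (rule countable_imp_null_set_lborel[OF mono_ctble_discont[OF mono]])
  have "(\<lambda>k. integral\<^sup>L lborel (\<lambda>z. \<rho> z * (z * \<phi> (v k * z))))
      \<longlonglongrightarrow> integral\<^sup>L lborel (\<lambda>z. \<rho> z * (z * \<phi> z))"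
  proof (rule integral_dominated_convergence[where w="\<lambda>z. \<rho> z * (1 + z^2) * (A + C * 2^(2*n) * z^(2*n))"])
    show "integrable lborel (\<lambda>z. \<rho> z * (1 + z^2) * (A + C * 2^(2*n) * z^(2*n)))"
      by (rule integrable_wb[OF nonneg mono bnd A0 C0])
    show "AE z in lborel. (\<lambda>k. \<rho> z * (z * \<phi> (v k * z))) \<longlonglongrightarrow> \<rho> z * (z * \<phi> z)"
    proof (rule AE_I'[OF null], safe)
      fix z assume "z \<in> space lborel" and nc: "\<not> (\<lambda>k. \<rho> z * (z * \<phi> (v k * z))) \<longlonglongrightarrow> \<rho> z * (z * \<phi> z)"
      show "isCont \<phi> z \<Longrightarrow> False"
      proof -
        assume ic: "isCont \<phi> z"
        have "(\<lambda>k. v k * z) \<longlonglongrightarrow> 1 * z" by (intro tendsto_mult v tendsto_const)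
        then have "(\<lambda>k. \<phi> (v k * z)) \<longlonglongrightarrow> \<phi> z"
          using isCont_tendsto_compose[OF ic] by simp
        then have "(\<lambda>k. \<rho> z * (z * \<phi> (v k * z))) \<longlonglongrightarrow> \<rho> z * (z * \<phi> z)"
          by (intro tendsto_mult tendsto_const)
        with nc show False by simp
      qed
    qed
    fix k
    have "\<bar>v k\<bar> \<le> 2" by (auto simp: v_def)
    then show "AE z in lborel. norm (\<rho> z * (z * \<phi> (v k * z))) \<le> \<rho> z * (1 + z^2) * (A + C * 2^(2*n) * z^(2*n))"
      by (intro AE_I2 norm_le_wb[OF nonneg mono bnd A0 C0])
  qed measurable
  then have "(\<lambda>k. hh \<phi> (v k)) \<longlonglongrightarrow> hh \<phi> 1"
    by (simp add: hh_def gauss_int_def)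
  moreover have "eventually (\<lambda>k. hh \<phi> (u k) = hh \<phi> (v k)) sequentially"
    using ev by eventually_elim simp
  ultimately show "(\<lambda>k. hh \<phi> (u k)) \<longlonglongrightarrow> hh \<phi> 1"
    by (simp add: tendsto_cong)
qed

lemma hh_pos:
  assumes nonconst: "\<exists>x y. \<phi> x \<noteq> \<phi> y"
  shows "hh \<phi> 1 > 0"
proof -
  obtain t where t: "\<phi> t \<noteq> \<phi> 0" using nonconst by metis
  define q where "q z = z * (\<phi> z - \<phi> 0)" for z
  have q0: "q z \<ge> 0" for z
  proof (cases "z \<ge> 0")
    case True then show ?thesis using mono by (auto simp: q_def mono_def)
  next
    case False then have "\<phi> z \<le> \<phi> 0" using mono by (auto simp: mono_def)
    with False show ?thesis by (auto simp: q_def mult_nonpos_nonpos)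
  qed
  have int1: "integrable lborel (\<lambda>z. \<rho> z * (z * \<phi> (1 * z)))"
    by (rule integrable_h[OF nonneg mono bnd A0 C0])
  have int2: "integrable lborel (\<lambda>z. \<phi> 0 * (\<rho> z * z^(2*0+1)))"
    by (intro integrable_mult_right integrable_std_normal_moment)
  have eqq: "(\<lambda>z. \<rho> z * q z) = (\<lambda>z. \<rho> z * (z * \<phi> (1 * z)) - \<phi> 0 * (\<rho> z * z^(2*0+1)))"
    by (auto simp: q_def algebra_simps)
  have intq: "integrable lborel (\<lambda>z. \<rho> z * q z)"
    unfolding eqq using int1 int2 by (rule Bochner_Integration.integrable_diff)
  have "integral\<^sup>L lborel (\<lambda>z. \<rho> z * q z) = hh \<phi> 1 - \<phi> 0 * 0"
    unfolding eqq using int1 int2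
    by (simp only: Bochner_Integration.integral_diff integral_mult_right_zero 
        integral_std_normal_moment_odd, simp add: hh_def gauss_int_def)
  moreover have "integral\<^sup>L lborel (\<lambda>z. \<rho> z * q z) > 0"
  proof (cases "t > 0")
    case True
    then have "\<phi> t > \<phi> 0" using t mono by (metis less_eq_real_def monoD)
    show ?thesis
    proof (rule pos_integral[OF intq q0, of "q t" t])
      show "0 < q t" using True \<open>\<phi> t > \<phi> 0\<close> by (simp add: q_def)
      fix z assume "z \<in> {t..t+1}"
      then have "z \<ge> t" by auto
      then have "\<phi> z \<ge> \<phi> t" using mono by (simp add: monoD)
      then show "q t \<le> q z" unfolding q_def using \<open>z \<ge> t\<close> True \<open>\<phi> t > \<phi> 0\<close>
        by (intro mult_mono) auto
    qed
  next
    case False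
    then have "t < 0" using t by (cases "t = 0") auto
    then have "\<phi> t < \<phi> 0" using t mono by (metis less_eq_real_def monoD)
    show ?thesis
    proof (rule pos_integral[OF intq q0, of "q t" "t - 1"])
      show "0 < q t" using \<open>t < 0\<close> \<open>\<phi> t < \<phi> 0\<close> by (simp add: q_def mult_neg_neg)
      fix z assume "z \<in> {t-1..t-1+1}"
      then have "z \<le> t" by auto
      then have "\<phi> z \<le> \<phi> t" using mono by (simp add: monoD)
      have "(-t) * (\<phi> 0 - \<phi> t) \<le> (-z) * (\<phi> 0 - \<phi> z)"
        using \<open>z \<le> t\<close> \<open>t < 0\<close> \<open>\<phi> t < \<phi> 0\<close> \<open>\<phi> z \<le> \<phi> t\<close> by (intro mult_mono) auto
      then show "q t \<le> q z" unfolding q_def by (simp add: algebra_simps)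
    qed
  qed
  ultimately show ?thesis by simp
qed

end

lemma exp_sq: "(exp (y::real))^2 = exp (2 * y)"
  by (subst mult_2, subst exp_add, simp add: power2_eq_square)

lemma base_a:
  fixes \<delta> :: real assumes d: "0 < \<delta>" "\<delta> \<le> 1"
  shows "exp (- (\<delta>/8) * (1 + \<delta>)) / sqrt (1 - 2 * (\<delta>/8)) < 1"
proof -
  define x where "x = \<delta>/4"
  have x: "0 < x" "x \<le> 1/2" using d by (auto simp: x_def)
  have "- x - 2 * x^2 \<le> ln (1 - x)" by (rule ln_one_minus_pos_lower_bound) (use x in auto)
  moreover have "- x * (1 + \<delta>) < - x - 2 * x^2"
  proof -
    have "x * (2 * x) < x * \<delta>" using x d by (intro mult_strict_left_mono) (auto simp: x_def)
    then show ?thesis by (simp add: power2_eq_square algebra_simps)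
  qed
  ultimately have "exp (- x * (1 + \<delta>)) < exp (ln (1 - x))" by simp
  also have "\<dots> = 1 - x" using x by simp
  finally have lt: "exp (- x * (1 + \<delta>)) < 1 - x" .
  have e1: "(exp (- (\<delta>/8) * (1 + \<delta>)))^2 = exp (- x * (1 + \<delta>))"
    unfolding exp_sq by (rule arg_cong[where f=exp]) (simp add: x_def field_simps)
  have e2: "(sqrt (1 - 2 * (\<delta>/8)))^2 = 1 - x" using x d by (simp add: x_def)
  have "(exp (- (\<delta>/8) * (1 + \<delta>)))^2 < (sqrt (1 - 2 * (\<delta>/8)))^2"
    unfolding e1 e2 by (rule lt)
  then have "exp (- (\<delta>/8) * (1 + \<delta>)) < sqrt (1 - 2 * (\<delta>/8))"
    by (rule power2_less_imp_less) (use d in simp)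
  moreover have "sqrt (1 - 2 * (\<delta>/8)) > 0" using d by simp
  ultimately show ?thesis by simp
qed

lemma base_b:
  fixes \<delta> :: real assumes d: "0 < \<delta>" "\<delta> \<le> 1"
  shows "exp ((\<delta>/8) * (1 - \<delta>)) / sqrt (1 + 2 * (\<delta>/8)) < 1"
proof -
  define x where "x = \<delta>/4"
  have x: "0 < x" "x \<le> 1" using d by (auto simp: x_def)
  have "x - x^2 \<le> ln (1 + x)" by (rule ln_one_plus_pos_lower_bound) (use x in auto)
  moreover have "x * (1 - \<delta>) < x - x^2"
  proof -
    have "x * x < x * \<delta>" using x d by (intro mult_strict_left_mono) (auto simp: x_def)
    then show ?thesis by (simp add: power2_eq_square algebra_simps)
  qed
  ultimately have "exp (x * (1 - \<delta>)) < exp (ln (1 + x))" by simp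
  also have "\<dots> = 1 + x" using x by simp
  finally have lt: "exp (x * (1 - \<delta>)) < 1 + x" .
  have e1: "(exp ((\<delta>/8) * (1 - \<delta>)))^2 = exp (x * (1 - \<delta>))"
    unfolding exp_sq by (rule arg_cong[where f=exp]) (simp add: x_def field_simps)
  have e2: "(sqrt (1 + 2 * (\<delta>/8)))^2 = 1 + x" using x d by (simp add: x_def)
  have "(exp ((\<delta>/8) * (1 - \<delta>)))^2 < (sqrt (1 + 2 * (\<delta>/8)))^2"
    unfolding e1 e2 by (rule lt)
  then have "exp ((\<delta>/8) * (1 - \<delta>)) < sqrt (1 + 2 * (\<delta>/8))"
    by (rule power2_less_imp_less) (use d in simp)
  moreover have "sqrt (1 + 2 * (\<delta>/8)) > 0" using d by simp
  ultimately show ?thesis by simp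
qed

lemma pow_le_exp:
  fixes y :: real assumes "y \<ge> 0"
  shows "y^n \<le> (2 * (real n + 1))^n * exp (y / 2)"
proof -
  define N where "N = 2 * (real n + 1)"
  have N: "N > 0" by (simp add: N_def)
  have "y / N \<le> exp (y / N)" using exp_ge_add_one_self[of "y/N"] by linarith
  then have "(y / N)^n \<le> (exp (y / N))^n" using assms N by (intro power_mono) auto
  also have "\<dots> = exp (real n * (y / N))" by (rule exp_of_nat_mult[symmetric])
  also have "\<dots> \<le> exp (y / 2)"
    using assms N by (simp add: N_def field_simps)
  finally have "y^n / N^n \<le> exp (y / 2)" by (simp add: power_divide)
  then have "y^n \<le> N^n * exp (y / 2)" using N by (simp add: divide_le_eq mult.commute)
  then show ?thesis unfolding N_def .
qed

context
  fixes \<phi> :: "real \<Rightarrow> real" and A C :: real and n :: nat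
  assumes nonneg: "\<And>x. \<phi> x \<ge> 0" and mono: "mono \<phi>"
    and bnd: "\<And>v. \<phi> v \<le> A + C * v^(2*n)" and A0: "A \<ge> 0" and C0: "C \<ge> 0"
    and nonconst: "\<exists>x y. \<phi> x \<noteq> \<phi> y"
begin

lemma m_eq: "m_phi \<phi> = inverse (hh \<phi> 1)"
  by (simp add: m_phi_def hh_def)

lemma g_cont:
  assumes "\<epsilon> > 0"
  shows "\<exists>\<delta>>0. \<delta> \<le> 1 \<and> (\<forall>r\<ge>0. \<bar>r^2 - 1\<bar> < \<delta> \<longrightarrow> (m_phi \<phi> * hh \<phi> r - r)^2 < \<epsilon>)"
proof -
  have pos: "hh \<phi> 1 > 0" by (rule hh_pos[OF nonneg mono bnd A0 C0 nonconst])
  have "isCont (\<lambda>r. (m_phi \<phi> * hh \<phi> r - r)^2) 1"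
    by (intro continuous_intros hh_cont[OF nonneg mono bnd A0 C0])
  moreover have "(m_phi \<phi> * hh \<phi> 1 - 1)^2 = 0" using pos by (simp add: m_eq)
  ultimately obtain s where s: "s > 0" 
    and hs: "\<And>r. dist r 1 < s \<Longrightarrow> dist ((m_phi \<phi> * hh \<phi> r - r)^2) 0 < \<epsilon>"
    using assms unfolding continuous_at_eps_delta by (metis)
  show ?thesis
  proof (intro exI[of _ "min s 1"] conjI allI impI)
    fix r :: real assume r: "r \<ge> 0" "\<bar>r^2 - 1\<bar> < min s 1"
    have "\<bar>r - 1\<bar> \<le> \<bar>r^2 - 1\<bar>"
    proof -
      have "r^2 - 1 = (r - 1) * (r + 1)" by (simp add: power2_eq_square algebra_simps)
      then have "\<bar>r^2 - 1\<bar> = \<bar>r - 1\<bar> * (r + 1)" using r by (simp add: abs_mult)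
      moreover have "\<bar>r - 1\<bar> * 1 \<le> \<bar>r - 1\<bar> * (r + 1)" using r by (intro mult_left_mono) auto
      ultimately show ?thesis by simp
    qed
    then have "dist r 1 < s" using r by (simp add: dist_real_def)
    from hs[OF this] have "\<bar>(m_phi \<phi> * hh \<phi> r - r)^2\<bar> < \<epsilon>" by (simp add: dist_real_def)
    then show "(m_phi \<phi> * hh \<phi> r - r)^2 < \<epsilon>" by simp
  qed (use s in auto)
qed

lemma g_growth: "\<exists>K>0. \<forall>r\<ge>0. (m_phi \<phi> * hh \<phi> r - r)^2 \<le> K * exp (r^2)"
proof -
  have J1: "J1 \<ge> 0" unfolding J1_def
    by (intro integral_nonneg_AE AE_I2 mult_nonneg_nonneg rho_nonneg) auto
  have J2: "J2 n \<ge> 0" unfolding J2_def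
    by (intro integral_nonneg_AE AE_I2 mult_nonneg_nonneg rho_nonneg) (auto simp: zero_le_even_power)
  define m where "m = \<bar>m_phi \<phi>\<bar>"
  define K' where "K' = m * (A * J1) + m * (C * J2 n) * (2 * (real n + 1))^n + 3"
  have m0: "m \<ge> 0" by (simp add: m_def)
  have K'0: "K' > 0" unfolding K'_def using m0 A0 C0 J1 J2 by (intro add_nonneg_pos) auto
  have "\<bar>m_phi \<phi> * hh \<phi> r - r\<bar> \<le> K' * exp (r^2 / 2)" if r: "r \<ge> 0" for r
  proof -
    define y where "y = r^2"
    have y: "y \<ge> 0" by (simp add: y_def)
    have e1: "1 \<le> exp (y/2)" using y by simp
    have "r \<le> 1 + y"
    proof (cases "r \<le> 1")
      case True then show ?thesis using y by simp
    next
      case False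
      then have "r * 1 \<le> r * r" by (intro mult_left_mono) auto
      then show ?thesis by (simp add: y_def power2_eq_square)
    qed
    also have "1 + y \<le> 3 * exp (y/2)"
      using exp_ge_add_one_self[of "y/2"] e1 by linarith
    finally have rb: "r \<le> 3 * exp (y/2)" .
    have "\<bar>hh \<phi> r\<bar> \<le> A * J1 + C * \<bar>r\<bar>^(2*n) * J2 n" by (rule hh_bound[OF nonneg mono bnd A0 C0])
    moreover have "\<bar>r\<bar>^(2*n) = y^n" using r by (simp add: y_def power_mult)
    ultimately have hb: "\<bar>hh \<phi> r\<bar> \<le> A * J1 + (C * J2 n) * y^n" by (simp add: algebra_simps)
    have "y^n \<le> (2 * (real n + 1))^n * exp (y/2)" by (rule pow_le_exp[OF y])
    then have "(C * J2 n) * y^n \<le> (C * J2 n) * ((2 * (real n + 1))^n * exp (y/2))"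
      using C0 J2 by (intro mult_left_mono) auto
    with hb have hb2: "\<bar>hh \<phi> r\<bar> \<le> A * J1 * exp (y/2) + (C * J2 n) * ((2 * (real n + 1))^n * exp (y/2))"
    proof -
      have "A * J1 * 1 \<le> A * J1 * exp (y/2)" using A0 J1 e1 by (intro mult_left_mono) auto
      then show ?thesis using hb \<open>(C * J2 n) * y^n \<le> _\<close> by linarith
    qed
    have "\<bar>m_phi \<phi> * hh \<phi> r - r\<bar> \<le> m * \<bar>hh \<phi> r\<bar> + r"
      using abs_triangle_ineq4[of "m_phi \<phi> * hh \<phi> r" r] r by (simp add: m_def abs_mult)
    also have "\<dots> \<le> m * (A * J1 * exp (y/2) + (C * J2 n) * ((2 * (real n + 1))^n * exp (y/2))) + 3 * exp (y/2)"
      using hb2 rb m0 by (intro add_mono mult_left_mono) auto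
    also have "\<dots> = K' * exp (y/2)" by (simp add: K'_def algebra_simps)
    finally show ?thesis by (simp add: y_def)
  qed
  then have "(m_phi \<phi> * hh \<phi> r - r)^2 \<le> K'^2 * exp (r^2)" if "r \<ge> 0" for r
  proof -
    have "(m_phi \<phi> * hh \<phi> r - r)^2 = \<bar>m_phi \<phi> * hh \<phi> r - r\<bar>^2" by simp
    also have "\<dots> \<le> (K' * exp (r^2 / 2))^2"
      using \<open>r \<ge> 0\<close> \<open>\<And>r. r \<ge> 0 \<Longrightarrow> _\<close> by (intro power_mono) auto
    also have "\<dots> = K'^2 * exp (r^2)" by (simp add: power_mult_distrib exp_sq)
    finally show ?thesis .
  qed
  then show ?thesis using K'0 by (intro exI[of _ "K'^2"]) auto
qed

lemma g_bound:
  assumes "\<epsilon> > 0"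
  shows "\<exists>\<delta> K. 0 < \<delta> \<and> \<delta> \<le> 1 \<and> K \<ge> 0 \<and> (\<forall>r\<ge>0. \<forall>P::real. (\<delta>/8) * P \<ge> 1 \<longrightarrow>
     (m_phi \<phi> * hh \<phi> r - r)^2 \<le> \<epsilon> + K * (exp ((\<delta>/8) * (P * r^2 - P * (1 + \<delta>))) + exp ((\<delta>/8) * (P * (1 - \<delta>) - P * r^2))))"
proof -
  obtain \<delta> where d: "\<delta> > 0" "\<delta> \<le> 1" and hd: "\<And>r. r \<ge> 0 \<Longrightarrow> \<bar>r^2 - 1\<bar> < \<delta> \<Longrightarrow> (m_phi \<phi> * hh \<phi> r - r)^2 < \<epsilon>"
    using g_cont[OF assms] by blast
  obtain K where K: "K > 0" and hK: "\<And>r. r \<ge> 0 \<Longrightarrow> (m_phi \<phi> * hh \<phi> r - r)^2 \<le> K * exp (r^2)"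
    using g_growth by blast
  define c where "c = \<delta>/8"
  have key: "(m_phi \<phi> * hh \<phi> r - r)^2 \<le> \<epsilon> + K * exp 2 * (exp ((\<delta>/8) * (P * r^2 - P * (1 + \<delta>))) + exp ((\<delta>/8) * (P * (1 - \<delta>) - P * r^2)))"
    if r: "r \<ge> 0" and P: "\<delta>/8 * P \<ge> 1" for r P :: real
  proof -
    have c0: "c > 0" using d by (simp add: c_def)
    have P0: "P > 0"
    proof (rule ccontr)
      assume "\<not> P > 0"
      then have "\<delta>/8 * P \<le> 0" using d by (intro mult_nonneg_nonpos) auto
      with P show False by simp
    qed
    let ?E1 = "exp ((\<delta>/8) * (P * r^2 - P * (1 + \<delta>)))"
    let ?E2 = "exp ((\<delta>/8) * (P * (1 - \<delta>) - P * r^2))"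
    have E: "?E1 > 0" "?E2 > 0" by auto
    have Ke: "K * exp 2 > 0" using K by simp
    consider "\<bar>r^2 - 1\<bar> < \<delta>" | "r^2 \<ge> 1 + \<delta>" | "r^2 \<le> 1 - \<delta>" by linarith
    then show "(m_phi \<phi> * hh \<phi> r - r)^2 \<le> \<epsilon> + K * exp 2 * (?E1 + ?E2)"
    proof cases
      case 1
      have "0 < K * exp 2 * (?E1 + ?E2)" by (rule mult_pos_pos[OF Ke add_pos_pos[OF E]])
      then show ?thesis using hd[OF r 1] by linarith
    next
      case 2
      define x where "x = r^2 - 1 - \<delta>"
      have x0: "x \<ge> 0" using 2 by (simp add: x_def)
      have "x \<le> (\<delta>/8 * P) * x" using mult_right_mono[OF P x0] by simp
      moreover have eqx: "\<delta>/8 * (P * r^2 - P * (1 + \<delta>)) = (\<delta>/8 * P) * x" by (simp add: x_def algebra_simps)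
      ultimately have "exp x \<le> ?E1" unfolding eqx by simp
      have "(m_phi \<phi> * hh \<phi> r - r)^2 \<le> K * exp (r^2)" by (rule hK[OF r])
      also have "exp (r^2) = exp 2 * exp (r^2 - 2)" by (simp add: exp_add[symmetric])
      also have "exp (r^2 - 2) \<le> exp x" using d by (simp add: x_def)
      also note \<open>exp x \<le> ?E1\<close>
      finally have "(m_phi \<phi> * hh \<phi> r - r)^2 \<le> K * (exp 2 * ?E1)"
        using K by (simp add: mult_left_mono)
      moreover have "0 \<le> K * exp 2 * ?E2" using E Ke by simp
      ultimately show ?thesis using \<open>\<epsilon> > 0\<close> by (simp add: algebra_simps)
    next
      case 3
      have "(m_phi \<phi> * hh \<phi> r - r)^2 \<le> K * exp (r^2)" by (rule hK[OF r])
      also have "exp (r^2) \<le> exp 2" using 3 d by simp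
      also have "1 \<le> ?E2"
      proof -
        have "P * (1 - \<delta>) - P * r^2 = P * (1 - \<delta> - r^2)" by (simp add: algebra_simps)
        moreover have "0 \<le> P * (1 - \<delta> - r^2)" using 3 P0 by simp
        ultimately have "0 \<le> \<delta>/8 * (P * (1 - \<delta>) - P * r^2)" using d by simp
        then show ?thesis by simp
      qed
      then have "exp 2 \<le> exp 2 * ?E2" by simp
      finally have "(m_phi \<phi> * hh \<phi> r - r)^2 \<le> K * (exp 2 * ?E2)"
        using K by (simp add: mult_left_mono)
      moreover have "0 \<le> K * exp 2 * ?E1" using E Ke by simp
      ultimately show ?thesis using \<open>\<epsilon> > 0\<close> by (simp add: algebra_simps)
    qed
  qed
  show ?thesis
    by (rule exI[of _ \<delta>], rule exI[of _ "K * exp 2"]) (use d K key in auto)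
qed

end

lemma gauss_mgf_pointwise:
  fixes t :: real assumes t: "t < 1/2"
  shows "\<rho> x * exp (t * x^2) = (1 / sqrt (1 - 2*t)) * normal_density 0 (1 / sqrt (1 - 2*t)) x"
proof -
  define s where "s = 1 - 2*t"
  have s: "s > 0" using t by (simp add: s_def)
  have sq: "(1 / sqrt s)^2 = 1 / s" using s by (simp add: power_divide)
  have "sqrt (2 * pi * (1 / sqrt s)^2) = sqrt (2 * pi) / sqrt s"
    unfolding sq by (simp add: real_sqrt_divide real_sqrt_mult)
  then have "(1 / sqrt s) * normal_density 0 (1 / sqrt s) x = exp (- (x^2 * s) / 2) / sqrt (2 * pi)"
    unfolding normal_density_def sq using s by (simp add: field_simps)
  moreover have "- (x^2 * s) / 2 = - (x^2) / 2 + t * x^2" by (simp add: s_def field_simps)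
  moreover have "exp (- (x^2) / 2 + t * x^2) / sqrt (2 * pi) = \<rho> x * exp (t * x^2)"
    unfolding exp_add std_normal_density_def by simp
  ultimately show ?thesis unfolding s_def by metis
qed

lemma gauss_mgf_lborel:
  fixes t :: real assumes t: "t < 1/2"
  shows "has_bochner_integral lborel (\<lambda>x. \<rho> x * exp (t * x^2)) (1 / sqrt (1 - 2*t))"
proof -
  have "has_bochner_integral lborel (\<lambda>x. (1 / sqrt (1 - 2*t)) * normal_density 0 (1 / sqrt (1 - 2*t)) x) ((1 / sqrt (1 - 2*t)) * 1)"
    using integrable_normal_density[where \<sigma>="1 / sqrt (1 - 2*t)" and \<mu>=0]
      integral_normal_density[where \<sigma>="1 / sqrt (1 - 2*t)" and \<mu>=0] t
    by (intro has_bochner_integral_mult_right) (simp add: has_bochner_integral_iff)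
  then show ?thesis by (simp add: gauss_mgf_pointwise[OF t])
qed

abbreviation "N\<rho> \<equiv> density lborel (\<lambda>x. ennreal (\<rho> x))"

lemma gauss_mgf_N:
  fixes t :: real assumes t: "t < 1/2"
  shows "integrable N\<rho> (\<lambda>x. exp (t * x^2))" "integral\<^sup>L N\<rho> (\<lambda>x. exp (t * x^2)) = 1 / sqrt (1 - 2*t)"
proof -
  have h: "has_bochner_integral lborel (\<lambda>x. \<rho> x * exp (t * x^2)) (1 / sqrt (1 - 2*t))"
    by (rule gauss_mgf_lborel[OF t])
  show "integrable N\<rho> (\<lambda>x. exp (t * x^2))"
    using h by (subst integrable_density) (auto simp: has_bochner_integral_iff normal_density_nonneg)
  show "integral\<^sup>L N\<rho> (\<lambda>x. exp (t * x^2)) = 1 / sqrt (1 - 2*t)"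
    using h by (subst integral_density) (auto simp: has_bochner_integral_iff normal_density_nonneg)
qed

lemma N_prob: "prob_space N\<rho>"
  using prob_space_normal_density[where \<sigma>=1 and \<mu>=0] by simp

lemma mgf_sum:
  fixes M :: "'a measure" and X :: "nat \<Rightarrow> 'a \<Rightarrow> real" and t :: real
  assumes prob: "prob_space M" and indep: "prob_space.indep_vars M (\<lambda>_. borel) X UNIV"
    and gauss: "\<And>i. distributed M lborel (X i) std_normal_density" and t: "t < 1/2"
  shows "integrable M (\<lambda>\<omega>. exp (t * (\<Sum>i<P. (X i \<omega>)^2)))
     \<and> integral\<^sup>L M (\<lambda>\<omega>. exp (t * (\<Sum>i<P. (X i \<omega>)^2))) = (1 / sqrt (1 - 2*t))^P"
proof (cases "P = 0")
  case True
  interpret prob_space M by (rule prob)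
  show ?thesis using True prob_space.prob_space[OF prob] by simp
next
  case False
  interpret prob_space M by (rule prob)
  define I where "I = {..<P}"
  have I: "I \<noteq> {}" "finite I" using False by (auto simp: I_def)
  have rv: "random_variable borel (X i)" for i
    using distributed_measurable[OF gauss[of i]] by simp
  have indI: "indep_vars (\<lambda>_. borel) X I"
    by (rule indep_vars_subset[OF indep]) auto
  have joint: "distr M (\<Pi>\<^sub>M i\<in>I. borel) (\<lambda>x. \<lambda>i\<in>I. X i x) = (\<Pi>\<^sub>M i\<in>I. distr M borel (X i))"
    using indep_vars_iff_distr_eq_PiM[OF I(1) rv] indI by simp
  have di: "distr M borel (X i) = N\<rho>" for i
  proof -
    have "distr M borel (X i) = distr M lborel (X i)" by (rule distr_cong) auto
    also have "\<dots> = N\<rho>" by (rule distributed_distr_eq_density[OF gauss])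
    finally show ?thesis .
  qed
  have joint': "distr M (\<Pi>\<^sub>M i\<in>I. borel) (\<lambda>x. \<lambda>i\<in>I. X i x) = (\<Pi>\<^sub>M i\<in>I. N\<rho>)"
    unfolding joint di ..
  interpret Np: prob_space N\<rho> by (rule N_prob)
  interpret PS: product_sigma_finite "\<lambda>_::nat. N\<rho>"
    by (simp add: product_sigma_finite_def Np.sigma_finite_measure_axioms)
  define F where "F y = (\<Prod>i\<in>I. exp (t * (y i)^2))" for y :: "nat \<Rightarrow> real"
  have vec: "(\<lambda>x. \<lambda>i\<in>I. X i x) \<in> measurable M (\<Pi>\<^sub>M i\<in>I. borel)"
    using rv by (intro measurable_restrict) auto
  have Fm: "F \<in> borel_measurable (\<Pi>\<^sub>M i\<in>I. (borel :: real measure))"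
    unfolding F_def using I(2) by measurable
  have intF: "integrable (\<Pi>\<^sub>M i\<in>I. N\<rho>) F"
    unfolding F_def by (rule PS.product_integrable_prod[OF I(2)]) (rule gauss_mgf_N(1)[OF t])
  have intgF: "integral\<^sup>L (\<Pi>\<^sub>M i\<in>I. N\<rho>) F = (1 / sqrt (1 - 2*t))^P"
    unfolding F_def
    by (subst PS.product_integral_prod[OF I(2)]) (auto simp: gauss_mgf_N[OF t] I_def)
  have Fx: "F (\<lambda>i\<in>I. X i \<omega>) = exp (t * (\<Sum>i<P. (X i \<omega>)^2))" for \<omega>
    by (simp add: F_def I_def exp_sum sum_distrib_left)
  have "integrable (distr M (\<Pi>\<^sub>M i\<in>I. borel) (\<lambda>x. \<lambda>i\<in>I. X i x)) F"
    unfolding joint' by (rule intF)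
  then have "integrable M (\<lambda>x. F (\<lambda>i\<in>I. X i x))"
    by (subst (asm) integrable_distr_eq[OF vec Fm])
  moreover have "integral\<^sup>L M (\<lambda>x. F (\<lambda>i\<in>I. X i x)) = (1 / sqrt (1 - 2*t))^P"
    using integral_distr[OF vec Fm] intgF joint' by simp
  ultimately show ?thesis unfolding Fx by simp
qed

theorem lemma3:
  fixes \<phi> :: "real \<Rightarrow> real"
    and M :: "'a measure"
    and X :: "nat \<Rightarrow> 'a \<Rightarrow> real"
  assumes nonneg: "\<And>x. \<phi> x \<ge> 0"
    and nonconst: "\<exists>x y. \<phi> x \<noteq> \<phi> y"
    and mono: "mono \<phi>"
    and growth: "\<exists>\<alpha>\<ge>0. \<exists>C. eventually (\<lambda>v. \<phi> v / \<bar>v\<bar> powr \<alpha> \<le> C) at_top"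
    and prob: "prob_space M"
    and indep: "prob_space.indep_vars M (\<lambda>_. borel) X UNIV"
    and gauss: "\<And>i. distributed M lborel (X i) std_normal_density"
  shows "(\<lambda>P. prob_space.expectation M (\<lambda>\<omega>.
            (m_phi \<phi> * gauss_int (\<lambda>z. z * \<phi> (sqrt (\<Sum>i<P. (X i \<omega>)\<^sup>2) / sqrt (real P) * z))
             - sqrt (\<Sum>i<P. (X i \<omega>)\<^sup>2) / sqrt (real P))\<^sup>2))
         \<longlonglongrightarrow> 0"
proof (rule LIMSEQ_I)
  fix r :: real assume r: "r > 0"
  obtain A C n where A0: "A \<ge> 0" and C0: "C \<ge> 0" and bnd: "\<And>v. \<phi> v \<le> A + C * v^(2*n)"
    using poly_bound[OF mono growth] by blast
  obtain \<delta> K where d: "0 < \<delta>" "\<delta> \<le> 1" and K: "K \<ge> 0" and gb: "\<And>rr P. rr \<ge> 0 \<Longrightarrow> (\<delta>/8) * P \<ge> 1 \<Longrightarrow>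
     (m_phi \<phi> * hh \<phi> rr - rr)^2 \<le> r/2 + K * (exp ((\<delta>/8) * (P * rr^2 - P * (1 + \<delta>))) + exp ((\<delta>/8) * (P * (1 - \<delta>) - P * rr^2)))"
    using g_bound[OF nonneg mono bnd A0 C0 nonconst, of "r/2"] r by auto
  define c where "c = \<delta>/8"
  have c: "0 < c" "c \<le> 1/8" using d by (auto simp: c_def)
  define a where "a = exp (- c * (1 + \<delta>)) / sqrt (1 - 2 * c)"
  define b where "b = exp (c * (1 - \<delta>)) / sqrt (1 + 2 * c)"
  have a: "0 < a" "a < 1" using base_a[OF d] c by (auto simp: a_def c_def)
  have b: "0 < b" "b < 1" using base_b[OF d] c by (auto simp: b_def c_def)
  have "(\<lambda>P. K * (a^P + b^P)) \<longlonglongrightarrow> K * (0 + 0)"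
    using a b by (intro tendsto_intros) auto
  then have ev1: "eventually (\<lambda>P. K * (a^P + b^P) < r/2) sequentially"
    using r by (intro order_tendstoD(2)) auto
  have ev2: "eventually (\<lambda>P::nat. c * real P \<ge> 1) sequentially"
  proof -
    obtain N :: nat where N: "real N \<ge> 1 / c" using real_arch_simple by blast
    have "c * real P \<ge> 1" if "P \<ge> N" for P
    proof -
      have "real P \<ge> 1 / c" using N that by linarith
      then show ?thesis using c by (simp add: field_simps)
    qed
    then show ?thesis by (auto simp: eventually_sequentially)
  qed
  obtain N where N: "\<And>P. P \<ge> N \<Longrightarrow> K * (a^P + b^P) < r/2 \<and> c * real P \<ge> 1"
    using eventually_conj[OF ev1 ev2] by (auto simp: eventually_sequentially)
  interpret prob_space M by (rule prob)
  show "\<exists>no. \<forall>P\<ge>no. norm (expectation (\<lambda>\<omega>.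
            (m_phi \<phi> * gauss_int (\<lambda>z. z * \<phi> (sqrt (\<Sum>i<P. (X i \<omega>)\<^sup>2) / sqrt (real P) * z))
             - sqrt (\<Sum>i<P. (X i \<omega>)\<^sup>2) / sqrt (real P))\<^sup>2) - 0) < r"
  proof (intro exI[of _ N] allI impI)
    fix P assume PN: "P \<ge> N"
    have KP: "K * (a^P + b^P) < r/2" and cP: "c * real P \<ge> 1" using N[OF PN] by auto
    have P0: "real P > 0" using cP c by (cases "P = 0") auto
    define S where "S \<omega> = (\<Sum>i<P. (X i \<omega>)\<^sup>2)" for \<omega>
    have S0: "S \<omega> \<ge> 0" for \<omega> by (simp add: S_def sum_nonneg)
    define G where "G \<omega> = (m_phi \<phi> * gauss_int (\<lambda>z. z * \<phi> (sqrt (S \<omega>) / sqrt (real P) * z))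
             - sqrt (S \<omega>) / sqrt (real P))\<^sup>2" for \<omega>
    define \<alpha> where "\<alpha> = exp (- c * real P * (1 + \<delta>))"
    define \<beta> where "\<beta> = exp (c * real P * (1 - \<delta>))"
    define B where "B \<omega> = r/2 + K * (\<alpha> * exp (c * S \<omega>) + \<beta> * exp ((- c) * S \<omega>))" for \<omega>
    have m1: "integrable M (\<lambda>\<omega>. exp (c * S \<omega>)) \<and> integral\<^sup>L M (\<lambda>\<omega>. exp (c * S \<omega>)) = (1 / sqrt (1 - 2*c))^P"
      unfolding S_def by (rule mgf_sum[OF prob indep gauss]) (use c in auto)
    have m2: "integrable M (\<lambda>\<omega>. exp ((-c) * S \<omega>)) \<and> integral\<^sup>L M (\<lambda>\<omega>. exp ((-c) * S \<omega>)) = (1 / sqrt (1 - 2*(-c)))^P"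
      unfolding S_def by (rule mgf_sum[OF prob indep gauss]) (use c in auto)
    have intB: "integrable M B"
      unfolding B_def using m1 m2 by (intro Bochner_Integration.integrable_add integrable_mult_right) auto
    have "integral\<^sup>L M B = r/2 + K * (\<alpha> * (1 / sqrt (1 - 2*c))^P + \<beta> * (1 / sqrt (1 - 2*(-c)))^P)"
      unfolding B_def using m1 m2 prob_space.prob_space[OF prob]
      by (simp add: Bochner_Integration.integral_add integrable_mult_right)
    also have "\<alpha> * (1 / sqrt (1 - 2*c))^P = a^P"
    proof -
      have "\<alpha> = exp (- c * (1 + \<delta>))^P" unfolding \<alpha>_def exp_of_nat_mult[symmetric]
        by (simp add: algebra_simps)
      then show ?thesis by (simp add: a_def power_mult_distrib power_divide)
    qed
    also have "\<beta> * (1 / sqrt (1 - 2*(-c)))^P = b^P"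
    proof -
      have "\<beta> = exp (c * (1 - \<delta>))^P" unfolding \<beta>_def exp_of_nat_mult[symmetric]
        by (simp add: algebra_simps)
      then show ?thesis by (simp add: b_def power_mult_distrib power_divide)
    qed
    finally have EB: "integral\<^sup>L M B = r/2 + K * (a^P + b^P)" .
    have GB: "G \<omega> \<le> B \<omega>" for \<omega>
    proof -
      define rr where "rr = sqrt (S \<omega>) / sqrt (real P)"
      have rr0: "rr \<ge> 0" using S0 by (simp add: rr_def)
      have Prr: "real P * rr^2 = S \<omega>" using S0[of \<omega>] P0 by (simp add: rr_def power_divide)
      have "G \<omega> = (m_phi \<phi> * hh \<phi> rr - rr)^2" by (simp add: G_def hh_def rr_def)
      also have "\<dots> \<le> r/2 + K * (exp ((\<delta>/8) * (real P * rr^2 - real P * (1 + \<delta>))) + exp ((\<delta>/8) * (real P * (1 - \<delta>) - real P * rr^2)))"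
        by (rule gb[OF rr0]) (use cP in \<open>simp add: c_def\<close>)
      also have "exp ((\<delta>/8) * (real P * rr^2 - real P * (1 + \<delta>))) = \<alpha> * exp (c * S \<omega>)"
        unfolding \<alpha>_def Prr mult_exp_exp by (simp add: c_def algebra_simps)
      also have "exp ((\<delta>/8) * (real P * (1 - \<delta>) - real P * rr^2)) = \<beta> * exp ((- c) * S \<omega>)"
        unfolding \<beta>_def Prr mult_exp_exp by (simp add: c_def algebra_simps)
      finally show ?thesis by (simp add: B_def)
    qed
    have G0: "G \<omega> \<ge> 0" for \<omega> by (simp add: G_def)
    have "integral\<^sup>L M G \<le> integral\<^sup>L M B"
      by (rule integral_mono'[OF intB]) (use GB G0 order_trans in blast)+
    moreover have "integral\<^sup>L M G \<ge> 0" by (intro integral_nonneg_AE AE_I2 G0)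
    ultimately have "\<bar>integral\<^sup>L M G\<bar> < r" using EB KP by simp
    then show "norm (expectation (\<lambda>\<omega>.
            (m_phi \<phi> * gauss_int (\<lambda>z. z * \<phi> (sqrt (\<Sum>i<P. (X i \<omega>)\<^sup>2) / sqrt (real P) * z))
             - sqrt (\<Sum>i<P. (X i \<omega>)\<^sup>2) / sqrt (real P))\<^sup>2) - 0) < r"
      unfolding G_def[abs_def] S_def by simp
  qed
qed

end
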